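(* Let $(p_n)$ be a scale and let $\mathbb{Z}_{(p_n)}$ be the odometer with scale $(p_n)$. Then the stabilized automorphism group $\operatorname{Aut}^{(\infty)}(\mathbb{Z}_{(p_n)},+\mathbf{1})$ is isomorphic (as a group) to the direct limit of a sequence of group monomorphisms $G_0\to G_1\to G_2\to\cdots$ in which each group $G_j$ is of the form $\left(\mathbb{Z}_{(q_n)}\right)^{p_k}\rtimes \operatorname{Sym}(p_k)$, where $\mathbb{Z}_{(q_n)}$ is an odometer that is a factor of $\mathbb{Z}_{(p_n)}$ and $p_k$ is a term of the scale $(p_n)$.
   Context: A scale is a sequence $(p_n)_{n\ge1}$ of positive integers with $p_n\mid p_{n+1}$ for all $n$; scales are assumed not eventually constant. The odometer with scale $(p_n)$ is the compact group $\mathbb{Z}_{(p_n)}=\{(x_n)\in\prod_{n\ge1}\mathbb{Z}/p_n\mathbb{Z} : x_{n+1}\equiv x_n \bmod p_n \text{ for all } n\}$ (product topology), with $\mathbf{1}=(1,1,1,\dots)$; the dynamical system $(\mathbb{Z}_{(p_n)},+\mathbf{1})$ is translation by $\mathbf{1}$. For a compact metric space $X$ and a homeomorphism $T$, $\operatorname{Aut}(X,T)$ is the group of homeomorphisms of $X$ commuting with $T$, and the stabilized automorphism group is $\operatorname{Aut}^{(\infty)}(X,T)=\bigcup_{n\ge1}\operatorname{Aut}(X,T^n)\subseteq\operatorname{Homeo}(X)$. A factor of $(\mathbb{Z}_{(p_n)},+\mathbf{1})$ is a system $(\mathbb{Z}_{(q_n)},+\mathbf{1})$ admitting a continuous surjection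 from $\mathbb{Z}_{(p_n)}$ intertwining the translations. $\operatorname{Sym}(n)$ is the symmetric group on $n$ symbols, and in $H^{n}\rtimes\operatorname{Sym}(n)$ the symmetric group acts by permuting coordinates. *)

theory Defs
  imports "HOL-Analysis.Analysis" "HOL-Algebra.Group" "HOL-Combinatorics.Permutations"
begin

(* Scales are indexed from 0: p 0, p 1, ... corresponds to p_1, p_2, ... of the paper. *)
definition scale :: "(nat \<Rightarrow> nat) \<Rightarrow> bool" where
  "scale p \<longleftrightarrow> (\<forall>n. 0 < p n \<and> p n dvd p (Suc n)) \<and> \<not> (\<exists>N. \<forall>n\<ge>N. p n = p N)"

(* The odometer: compatible sequences x n \<in> Z/(p n)Z, residues represented in {0..<p n}. *)
definition odometer :: "(nat \<Rightarrow> nat) \<Rightarrow> (nat \<Rightarrow> nat) set" where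
  "odometer p = {x. (\<forall>n. x n < p n) \<and> (\<forall>n. x (Suc n) mod p n = x n)}"

definition odo_top :: "(nat \<Rightarrow> nat) \<Rightarrow> (nat \<Rightarrow> nat) topology" where
  "odo_top p = subtopology (product_topology (\<lambda>_. discrete_topology UNIV) UNIV) (odometer p)"

definition odo_add :: "(nat \<Rightarrow> nat) \<Rightarrow> (nat \<Rightarrow> nat) \<Rightarrow> (nat \<Rightarrow> nat) \<Rightarrow> (nat \<Rightarrow> nat)" where
  "odo_add p x y = (\<lambda>n. (x n + y n) mod p n)"

definition odo_one :: "(nat \<Rightarrow> nat) \<Rightarrow> (nat \<Rightarrow> nat)" where
  "odo_one p = (\<lambda>n. 1 mod p n)"

definition add1 :: "(nat \<Rightarrow> nat) \<Rightarrow> (nat \<Rightarrow> nat) \<Rightarrow> (nat \<Rightarrow> nat)" where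
  "add1 p x = odo_add p x (odo_one p)"

definition odo_factor :: "(nat \<Rightarrow> nat) \<Rightarrow> (nat \<Rightarrow> nat) \<Rightarrow> bool" where
  "odo_factor q p \<longleftrightarrow> scale q \<and> (\<exists>\<pi>. continuous_map (odo_top p) (odo_top q) \<pi>
      \<and> \<pi> ` odometer p = odometer q
      \<and> (\<forall>x\<in>odometer p. \<pi> (add1 p x) = add1 q (\<pi> x)))"

definition aut_pow :: "(nat \<Rightarrow> nat) \<Rightarrow> nat \<Rightarrow> ((nat \<Rightarrow> nat) \<Rightarrow> (nat \<Rightarrow> nat)) set" where
  "aut_pow p n = {f. f \<in> extensional (odometer p) \<and> homeomorphic_map (odo_top p) (odo_top p) f
       \<and> (\<forall>x\<in>odometer p. f ((add1 p ^^ n) x) = (add1 p ^^ n) (f x))}"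

definition stab_aut :: "(nat \<Rightarrow> nat) \<Rightarrow> ((nat \<Rightarrow> nat) \<Rightarrow> (nat \<Rightarrow> nat)) monoid" where
  "stab_aut p = \<lparr> carrier = (\<Union>n\<in>{1..}. aut_pow p n),
                   mult = (\<lambda>f g. compose (odometer p) f g),
                   one = restrict id (odometer p) \<rparr>"

(* (Z_(q))^m \<rtimes> Sym(m): elements (v, \<sigma>) with v : {0..<m} \<rightarrow> Z_(q) and \<sigma> a permutation
   of {0..<m}; Sym(m) acts on coordinates by (\<sigma>.w) i = w (\<sigma>^-1 i). *)
definition odo_sdp :: "(nat \<Rightarrow> nat) \<Rightarrow> nat \<Rightarrow> ((nat \<Rightarrow> nat \<Rightarrow> nat) \<times> (nat \<Rightarrow> nat)) monoid" where
  "odo_sdp q m = \<lparr> carrier = {(v, \<sigma>). v \<in> {0..<m} \<rightarrow>\<^sub>E odometer q \<and> \<sigma> permutes {0..<m}},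
       mult = (\<lambda>(v, \<sigma>) (w, \<tau>). (restrict (\<lambda>i. odo_add q (v i) (w (inv_into UNIV \<sigma> i))) {0..<m}, \<sigma> \<circ> \<tau>)),
       one = (restrict (\<lambda>i. (\<lambda>n. 0)) {0..<m}, id) \<rparr>"

fun dl_lift :: "(nat \<Rightarrow> 'a \<Rightarrow> 'a) \<Rightarrow> nat \<Rightarrow> nat \<Rightarrow> 'a \<Rightarrow> 'a" where
  "dl_lift \<phi> i 0 = id"
| "dl_lift \<phi> i (Suc d) = \<phi> (i + d) \<circ> dl_lift \<phi> i d"

definition dl_rel :: "(nat \<Rightarrow> 'a monoid) \<Rightarrow> (nat \<Rightarrow> 'a \<Rightarrow> 'a) \<Rightarrow> ((nat \<times> 'a) \<times> (nat \<times> 'a)) set" where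
  "dl_rel G \<phi> = {((i, g), (j, h)). g \<in> carrier (G i) \<and> h \<in> carrier (G j) \<and>
      (\<exists>k. i \<le> k \<and> j \<le> k \<and> dl_lift \<phi> i (k - i) g = dl_lift \<phi> j (k - j) h)}"

definition dl_mult :: "(nat \<Rightarrow> 'a monoid) \<Rightarrow> (nat \<Rightarrow> 'a \<Rightarrow> 'a) \<Rightarrow> (nat \<times> 'a) set \<Rightarrow> (nat \<times> 'a) set \<Rightarrow> (nat \<times> 'a) set" where
  "dl_mult G \<phi> A B =
     (let (i, g) = (SOME a. a \<in> A); (j, h) = (SOME b. b \<in> B); k = max i j in
      dl_rel G \<phi> `` {(k, dl_lift \<phi> i (k - i) g \<otimes>\<^bsub>G k\<^esub> dl_lift \<phi> j (k - j) h)})"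

definition direct_limit :: "(nat \<Rightarrow> 'a monoid) \<Rightarrow> (nat \<Rightarrow> 'a \<Rightarrow> 'a) \<Rightarrow> ((nat \<times> 'a) set) monoid" where
  "direct_limit G \<phi> = \<lparr> carrier = (SIGMA j:UNIV. carrier (G j)) // dl_rel G \<phi>,
                        mult = dl_mult G \<phi>,
                        one = dl_rel G \<phi> `` {(0, \<one>\<^bsub>G 0\<^esub>)} \<rparr>"

end

theory Submission imports Defs "HOL-Number_Theory.Cong" begin

definition qq :: "(nat \<Rightarrow> nat) \<Rightarrow> nat \<Rightarrow> nat \<Rightarrow> nat" where
  "qq p K = (\<lambda>n. p (n + K) div p K)"

definition enc :: "(nat \<Rightarrow> nat) \<Rightarrow> nat \<Rightarrow> nat \<Rightarrow> (nat \<Rightarrow> nat) \<Rightarrow> (nat \<Rightarrow> nat)" where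
  "enc p K r z = (\<lambda>j. (r + p K * z j) mod p j)"

definition dz :: "(nat \<Rightarrow> nat) \<Rightarrow> nat \<Rightarrow> (nat \<Rightarrow> nat) \<Rightarrow> (nat \<Rightarrow> nat)" where
  "dz p K x = (\<lambda>j. x (j + K) div p K)"

definition odo_neg :: "(nat \<Rightarrow> nat) \<Rightarrow> (nat \<Rightarrow> nat) \<Rightarrow> (nat \<Rightarrow> nat)" where
  "odo_neg p x = (\<lambda>n. (p n - x n) mod p n)"

definition Psi :: "(nat \<Rightarrow> nat) \<Rightarrow> nat \<Rightarrow> ((nat \<Rightarrow> nat \<Rightarrow> nat) \<times> (nat \<Rightarrow> nat)) \<Rightarrow> (nat \<Rightarrow> nat) \<Rightarrow> (nat \<Rightarrow> nat)" where
  "Psi p K a = restrict (\<lambda>x. enc p K (snd a (x K)) (odo_add (qq p K) (dz p K x) (fst a (snd a (x K))))) (odometer p)"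

definition locK :: "(nat \<Rightarrow> nat) \<Rightarrow> nat \<Rightarrow> ((nat \<Rightarrow> nat) \<Rightarrow> (nat \<Rightarrow> nat)) \<Rightarrow> bool" where
  "locK p K f \<longleftrightarrow> (\<forall>x\<in>odometer p. \<forall>y\<in>odometer p. x K = y K \<longrightarrow>
      (\<forall>j. (f y j + x j) mod p j = (f x j + y j) mod p j))"

lemma perm_lt: assumes "\<sigma> permutes {0..<(m::nat)}" "r < m" shows "\<sigma> r < m"
proof -
  have "r \<in> {0..<m}" using assms(2) by simp
  then have "\<sigma> r \<in> {0..<m}" using permutes_in_image[OF assms(1)] by blast
  then show ?thesis by simp
qed

fun kS :: "(nat \<Rightarrow> nat) \<Rightarrow> (nat \<Rightarrow> nat) \<Rightarrow> nat \<Rightarrow> nat set" where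
  "kS p y 0 = UNIV"
| "kS p y (Suc j) = {m \<in> kS p y j. y m mod p j = (SOME r. r < p j \<and> infinite {m \<in> kS p y j. y m mod p j = r})}"

definition kr :: "(nat \<Rightarrow> nat) \<Rightarrow> (nat \<Rightarrow> nat) \<Rightarrow> nat \<Rightarrow> nat" where
  "kr p y j = (SOME r. r < p j \<and> infinite {m \<in> kS p y j. y m mod p j = r})"

lemma kS_Suc': "kS p y (Suc j) = {m \<in> kS p y j. y m mod p j = kr p y j}"
  by (simp add: kr_def)

definition piK :: "(nat \<Rightarrow> nat) \<Rightarrow> nat \<Rightarrow> (nat \<Rightarrow> nat) \<Rightarrow> (nat \<Rightarrow> nat)" where
  "piK p K x = (\<lambda>n. x (n + K) mod qq p K n)"

definition phiK :: "(nat \<Rightarrow> nat) \<Rightarrow> nat \<Rightarrow> ((nat \<Rightarrow> nat \<Rightarrow> nat) \<times> (nat \<Rightarrow> nat)) \<Rightarrow> ((nat \<Rightarrow> nat \<Rightarrow> nat) \<times> (nat \<Rightarrow> nat))" where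
  "phiK p K a = inv_into (carrier (odo_sdp (qq p (Suc K)) (p (Suc K)))) (Psi p (Suc K)) (Psi p K a)"

definition PhiD :: "(nat \<Rightarrow> nat) \<Rightarrow> ((nat \<Rightarrow> nat) \<Rightarrow> (nat \<Rightarrow> nat)) \<Rightarrow> (nat \<times> ((nat \<Rightarrow> nat \<Rightarrow> nat) \<times> (nat \<Rightarrow> nat))) set" where
  "PhiD p f = {(j, h). h \<in> carrier (odo_sdp (qq p j) (p j)) \<and> Psi p j h = f}"

locale odo =
  fixes p :: "nat \<Rightarrow> nat"
  assumes sc: "scale p"
begin

abbreviation "X \<equiv> odometer p"

lemma pos: "0 < p n"
  using sc unfolding scale_def by blast

lemma dvd_suc: "p n dvd p (Suc n)"
  using sc unfolding scale_def by blast

lemma dvd_mono: "m \<le> n \<Longrightarrow> p m dvd p n"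
proof (induction n)
  case 0 then show ?case by simp
next
  case (Suc n)
  then show ?case
    by (metis dvd_suc dvd_trans le_Suc_eq dvd_refl)
qed

lemma odo_lt: "x \<in> X \<Longrightarrow> x j < p j"
  unfolding odometer_def by blast

lemma odo_mod: assumes "x \<in> X" "i \<le> N" shows "x N mod p i = x i"
  using assms(2)
proof (induction N)
  case 0 then show ?case using odo_lt[OF assms(1)] by simp
next
  case (Suc N)
  show ?case
  proof (cases "i = Suc N")
    case True then show ?thesis using odo_lt[OF assms(1)] by simp
  next
    case False
    then have "i \<le> N" using Suc by simp
    have "x (Suc N) mod p i = x (Suc N) mod p N mod p i"
      using dvd_mono[OF \<open>i \<le> N\<close>] by (simp add: mod_mod_cancel)
    also have "\<dots> = x N mod p i" using assms(1) unfolding odometer_def by simp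
    finally show ?thesis using Suc.IH[OF \<open>i \<le> N\<close>] by simp
  qed
qed

lemma odo_eqI: assumes "x \<in> X" "y \<in> X" "x N = y N" "i \<le> N" shows "x i = y i"
  using odo_mod[OF assms(1,4)] odo_mod[OF assms(2,4)] assms(3) by simp

lemma odo_memI: "(\<And>j. x j < p j) \<Longrightarrow> (\<And>n. x (Suc n) mod p n = x n) \<Longrightarrow> x \<in> X"
  unfolding odometer_def by blast

lemma add_in: "x \<in> X \<Longrightarrow> y \<in> X \<Longrightarrow> odo_add p x y \<in> X"
  unfolding odo_add_def
proof (rule odo_memI)
  fix j show "(x j + y j) mod p j < p j" using pos by simp
next
  fix n assume "x \<in> X" "y \<in> X"
  have "(x (Suc n) + y (Suc n)) mod p (Suc n) mod p n = (x (Suc n) + y (Suc n)) mod p n"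
    using dvd_suc by (simp add: mod_mod_cancel)
  also have "\<dots> = (x (Suc n) mod p n + y (Suc n) mod p n) mod p n" by (simp add: mod_add_eq)
  also have "\<dots> = (x n + y n) mod p n" using \<open>x \<in> X\<close> \<open>y \<in> X\<close> unfolding odometer_def by simp
  finally show "(x (Suc n) + y (Suc n)) mod p (Suc n) mod p n = (x n + y n) mod p n" .
qed

lemma zero_in: "(\<lambda>n. 0) \<in> X"
  by (rule odo_memI) (auto simp: pos)

lemma add_comm: "odo_add p x y = odo_add p y x"
  unfolding odo_add_def by (simp add: add.commute)

lemma add_assoc: "odo_add p (odo_add p x y) z = odo_add p x (odo_add p y z)"
  unfolding odo_add_def by (simp add: mod_simps add.assoc)

lemma add_zero: "x \<in> X \<Longrightarrow> odo_add p x (\<lambda>n. 0) = x"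
  unfolding odo_add_def using odo_lt by auto

lemma zero_add: "x \<in> X \<Longrightarrow> odo_add p (\<lambda>n. 0) x = x"
  unfolding odo_add_def using odo_lt by auto

lemma neg_in: "x \<in> X \<Longrightarrow> odo_neg p x \<in> X"
  unfolding odo_neg_def
proof (rule odo_memI)
  fix j show "(p j - x j) mod p j < p j" using pos by simp
next
  fix n assume x: "x \<in> X"
  have lt: "x (Suc n) < p (Suc n)" "x n < p n" using odo_lt[OF x] by auto
  have "(p (Suc n) - x (Suc n)) mod p (Suc n) mod p n = (p (Suc n) - x (Suc n)) mod p n"
    using dvd_suc by (simp add: mod_mod_cancel)
  also have "\<dots> = (p n - x n) mod p n"
  proof -
    have e1: "x (Suc n) mod p n = x n" using x unfolding odometer_def by simp
    have "((p (Suc n) - x (Suc n)) + x (Suc n)) mod p n = 0"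
      using lt dvd_suc by simp
    moreover have "((p n - x n) + x n) mod p n = 0" using lt by simp
    ultimately have "((p (Suc n) - x (Suc n)) + x (Suc n) mod p n) mod p n = ((p n - x n) + x n) mod p n"
      by (simp add: mod_add_right_eq)
    then have "[(p (Suc n) - x (Suc n)) + x n = (p n - x n) + x n] (mod p n)"
      using e1 unfolding cong_def by simp
    then show ?thesis unfolding cong_def[symmetric] using cong_add_rcancel_nat by (simp add: cong_def)
  qed
  finally show "(p (Suc n) - x (Suc n)) mod p (Suc n) mod p n = (p n - x n) mod p n" .
qed

lemma neg_add: "x \<in> X \<Longrightarrow> odo_add p (odo_neg p x) x = (\<lambda>n. 0)"
  unfolding odo_add_def odo_neg_def
proof
  fix n assume "x \<in> X"
  then have "x n < p n" by (rule odo_lt)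
  then show "((p n - x n) mod p n + x n) mod p n = 0" by (simp add: mod_add_left_eq)
qed

lemma add1_pow: "x \<in> X \<Longrightarrow> (add1 p ^^ n) x = (\<lambda>j. (x j + n) mod p j)"
proof (induction n)
  case 0 then show ?case using odo_lt by auto
next
  case (Suc n)
  have "(add1 p ^^ Suc n) x = add1 p ((add1 p ^^ n) x)" by simp
  also have "\<dots> = (\<lambda>j. ((x j + n) mod p j + 1 mod p j) mod p j)"
    using Suc unfolding add1_def odo_add_def odo_one_def by simp
  also have "\<dots> = (\<lambda>j. (x j + Suc n) mod p j)"
  proof
    fix j show "((x j + n) mod p j + 1 mod p j) mod p j = (x j + Suc n) mod p j"
      by (metis add_Suc_right mod_add_eq plus_1_eq_Suc add.commute)
  qed
  finally show ?case .
qed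

lemma shift_in: "x \<in> X \<Longrightarrow> (\<lambda>j. (x j + n) mod p j) \<in> X"
proof (rule odo_memI)
  fix j show "(x j + n) mod p j < p j" using pos by simp
next
  fix k assume x: "x \<in> X"
  have "(x (Suc k) + n) mod p (Suc k) mod p k = (x (Suc k) + n) mod p k"
    using dvd_suc by (simp add: mod_mod_cancel)
  also have "\<dots> = (x (Suc k) mod p k + n) mod p k" by (simp add: mod_simps)
  also have "\<dots> = (x k + n) mod p k" using x unfolding odometer_def by simp
  finally show "(x (Suc k) + n) mod p (Suc k) mod p k = (x k + n) mod p k" .
qed

lemma pK_qq: "p K * qq p K n = p (n + K)"
  unfolding qq_def using dvd_mono[of K "n+K"] by simp

lemma qq_pos: "0 < qq p K n"
  using pK_qq[of K n] pos[of "n+K"] by (metis gr0I mult_0_right)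

lemma qq_dvd: "qq p K n dvd qq p K (Suc n)"
proof -
  have "p K * qq p K n dvd p K * qq p K (Suc n)"
    unfolding pK_qq using dvd_suc[of "n+K"] by simp
  then show ?thesis using pos[of K] by simp
qed

lemma scale_qq: "scale (qq p K)"
  unfolding scale_def
proof (intro conjI allI notI)
  fix n show "0 < qq p K n" using qq_pos by blast
next
  fix n show "qq p K n dvd qq p K (Suc n)" using qq_dvd by blast
next
  assume "\<exists>N. \<forall>n\<ge>N. qq p K n = qq p K N"
  then obtain N where N: "\<And>n. n \<ge> N \<Longrightarrow> qq p K n = qq p K N" by blast
  have "\<forall>n\<ge>N + K. p n = p (N + K)"
  proof (intro allI impI)
    fix n assume "n \<ge> N + K"
    then have "p n = p K * qq p K (n - K)" using pK_qq[of K "n - K"] by simp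
    also have "\<dots> = p K * qq p K N" using N[of "n - K"] \<open>n \<ge> N + K\<close> by simp
    also have "\<dots> = p (N + K)" by (rule pK_qq)
    finally show "p n = p (N + K)" .
  qed
  then show False using sc unfolding scale_def by blast
qed

lemma qq_odo: "odo (qq p K)"
  unfolding odo_def by (rule scale_qq)

lemma L_mod: "(p K * (a mod qq p K j)) mod p j = (p K * a) mod p j"
proof -
  have "p K * (a mod qq p K j) = (p K * a) mod p (j + K)"
    by (simp add: mult_mod_right pK_qq)
  then show ?thesis using dvd_mono[of j "j+K"] by (simp add: mod_mod_cancel)
qed

lemma enc_in: assumes z: "z \<in> odometer (qq p K)" shows "enc p K r z \<in> X"
  unfolding enc_def
proof (rule odo_memI)
  fix j show "(r + p K * z j) mod p j < p j" using pos by simp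
next
  fix j
  interpret Q: odo "qq p K" by (rule qq_odo)
  have zz: "z (Suc j) mod qq p K j = z j" using Q.odo_mod[OF z, of j "Suc j"] by simp
  have "p K * z (Suc j) mod p j = p K * z j mod p j"
    using L_mod[of K "z (Suc j)" j] zz by simp
  then have "(r + p K * z (Suc j)) mod p j = (r + p K * z j) mod p j"
    by (metis mod_add_right_eq)
  then show "(r + p K * z (Suc j)) mod p (Suc j) mod p j = (r + p K * z j) mod p j"
    using dvd_suc[of j] by (simp add: mod_mod_cancel)
qed

lemma enc_K: "r < p K \<Longrightarrow> enc p K r z K = r"
  unfolding enc_def by simp

lemma dz_in: assumes x: "x \<in> X" shows "dz p K x \<in> odometer (qq p K)"
  unfolding dz_def
proof (rule odo.odo_memI[OF qq_odo])
  fix j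
  have "x (j + K) < p K * qq p K j" using odo_lt[OF x] pK_qq by simp
  then show "x (j + K) div p K < qq p K j"
    by (simp add: less_mult_imp_div_less mult.commute)
next
  fix j
  let ?a = "x (Suc j + K)"
  have "?a mod (p K * qq p K j) = p K * (?a div p K mod qq p K j) + ?a mod p K"
    by (rule mod_mult2_eq)
  then have "?a div p K mod qq p K j = ?a mod (p K * qq p K j) div p K"
    using pos[of K] by simp
  also have "\<dots> = x (j + K) div p K"
    using odo_mod[OF x, of "j + K" "Suc j + K"] by (simp add: pK_qq)
  finally show "?a div p K mod qq p K j = x (j + K) div p K" .
qed

lemma enc_dz: assumes x: "x \<in> X" shows "enc p K (x K) (dz p K x) = x"
proof
  fix j
  have "x K = x (j + K) mod p K" using odo_mod[OF x, of K "j+K"] by simp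
  then have "x K + p K * (x (j + K) div p K) = x (j + K)" by simp
  then show "enc p K (x K) (dz p K x) j = x j"
    unfolding enc_def dz_def using odo_mod[OF x, of j "j+K"] by simp
qed

lemma dz_enc: assumes r: "r < p K" and z: "z \<in> odometer (qq p K)"
  shows "dz p K (enc p K r z) = z"
proof
  fix j
  interpret Q: odo "qq p K" by (rule qq_odo)
  let ?a = "r + p K * z (j + K)"
  have "?a mod (p K * qq p K j) = p K * (?a div p K mod qq p K j) + ?a mod p K"
    by (rule mod_mult2_eq)
  moreover have "?a div p K = z (j + K)" using r by simp
  moreover have "?a mod p K = r" using r by simp
  ultimately have "?a mod p (j + K) = p K * (z (j + K) mod qq p K j) + r"
    by (simp add: pK_qq)
  then have "?a mod p (j + K) div p K = z (j + K) mod qq p K j"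
    using r by simp
  then show "dz p K (enc p K r z) j = z j"
    unfolding dz_def enc_def using Q.odo_mod[OF z, of j "j + K"] by simp
qed

lemma coord: assumes x: "x \<in> X" shows "x j = (x K + p K * dz p K x j) mod p j"
  using enc_dz[OF x, of K] unfolding enc_def by (metis)


lemma topspace_odo: "topspace (odo_top p) = X"
  unfolding odo_top_def by simp

lemma open_cyl: "openin (odo_top p) {y \<in> X. y N = c}"
proof -
  have "openin (product_topology (\<lambda>_. discrete_topology (UNIV::nat set)) UNIV)
      {y \<in> topspace (product_topology (\<lambda>_. discrete_topology (UNIV::nat set)) UNIV). y N \<in> {c}}"
    by (rule openin_continuous_map_preimage[OF continuous_map_product_projection]) auto
  then have "openin (product_topology (\<lambda>_. discrete_topology (UNIV::nat set)) UNIV) {y. y N = c}"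
    by simp
  then show ?thesis unfolding odo_top_def openin_subtopology by blast
qed


lemma disc_cont:
  assumes loc: "\<And>x. x \<in> X \<Longrightarrow> \<exists>N. \<forall>y\<in>X. y N = x N \<longrightarrow> g y = g x"
  shows "continuous_map (odo_top p) (discrete_topology UNIV) g"
proof -
  have "openin (odo_top p) {x \<in> topspace (odo_top p). g x \<in> U}" for U
  proof (rule openin_subopen[THEN iffD2], rule ballI)
    fix x assume "x \<in> {x \<in> topspace (odo_top p). g x \<in> U}"
    then have x: "x \<in> X" "g x \<in> U" by (auto simp: topspace_odo)
    obtain N where N: "\<forall>y\<in>X. y N = x N \<longrightarrow> g y = g x" using loc[OF x(1)] by blast
    have "{y \<in> X. y N = x N} \<subseteq> {x \<in> topspace (odo_top p). g x \<in> U}"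
      using N x(2) by (auto simp: topspace_odo)
    moreover have "x \<in> {y \<in> X. y N = x N}" using x by simp
    ultimately show "\<exists>T. openin (odo_top p) T \<and> x \<in> T \<and> T \<subseteq> {x \<in> topspace (odo_top p). g x \<in> U}"
      using open_cyl by blast
  qed
  then show ?thesis unfolding continuous_map_def by simp
qed
lemma cont_LC:
  assumes im: "\<And>x. x \<in> X \<Longrightarrow> h x \<in> odometer q"
    and loc: "\<And>j. \<exists>N. \<forall>x\<in>X. \<forall>y\<in>X. x N = y N \<longrightarrow> h x j = h y j"
  shows "continuous_map (odo_top p) (odo_top q) h"
proof -
  have "continuous_map (odo_top p) (product_topology (\<lambda>_. discrete_topology (UNIV::nat set)) UNIV) h"
    unfolding continuous_map_componentwise_UNIV
  proof
    fix k
    obtain N where N: "\<forall>x\<in>X. \<forall>y\<in>X. x N = y N \<longrightarrow> h x k = h y k" using loc by blast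
    show "continuous_map (odo_top p) (discrete_topology UNIV) (\<lambda>x. h x k)"
      by (rule disc_cont) (use N in blast)
  qed
  moreover have "h \<in> topspace (odo_top p) \<rightarrow> odometer q" using im by (simp add: topspace_odo Pi_iff)
  ultimately show ?thesis unfolding odo_top_def[of q] continuous_map_in_subtopology by blast
qed

lemma LC_conv:
  assumes f: "continuous_map (odo_top p) (odo_top p) f" and x: "x \<in> X"
  shows "\<exists>N. \<forall>y\<in>X. y N = x N \<longrightarrow> f y j = f x j"
proof -
  have fX: "f x \<in> X" using f x unfolding continuous_map_def topspace_odo by blast
  let ?V = "{z \<in> X. z j = f x j}"
  have "openin (odo_top p) {y \<in> topspace (odo_top p). f y \<in> ?V}"
    by (rule openin_continuous_map_preimage[OF f open_cyl])
  then obtain T where T: "openin (product_topology (\<lambda>_. discrete_topology (UNIV::nat set)) UNIV) T"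
      "{y \<in> X. f y \<in> ?V} = T \<inter> X"
    unfolding odo_top_def openin_subtopology by auto
  have "x \<in> T" using T(2) x fX by blast
  then obtain U where U: "finite {i \<in> UNIV. U i \<noteq> topspace (discrete_topology (UNIV::nat set))}"
      "x \<in> PiE UNIV U" "PiE UNIV U \<subseteq> T"
    using T(1) unfolding openin_product_topology_alt by blast
  define F where "F = {i \<in> UNIV. U i \<noteq> topspace (discrete_topology (UNIV::nat set))}"
  define N where "N = Max (insert 0 F)"
  have FN: "i \<in> F \<Longrightarrow> i \<le> N" for i unfolding N_def using U(1) F_def by simp
  show ?thesis
  proof (intro exI ballI impI)
    fix y assume y: "y \<in> X" "y N = x N"
    have "y \<in> PiE UNIV U"
    proof -
      have "y i \<in> U i" for i
      proof (cases "i \<in> F")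
        case True
        then have "y i = x i" using odo_eqI[OF y(1) x y(2) FN] by simp
        then show ?thesis using U(2) by auto
      next
        case False then show ?thesis unfolding F_def by simp
      qed
      then show ?thesis by auto
    qed
    then have "y \<in> T" using U(3) by blast
    then show "f y j = f x j" using T(2) y(1) by blast
  qed
qed

abbreviation "GG K \<equiv> odo_sdp (qq p K) (p K)"

lemma carrier_GG: "a \<in> carrier (GG K) \<longleftrightarrow> fst a \<in> {0..<p K} \<rightarrow>\<^sub>E odometer (qq p K) \<and> snd a permutes {0..<p K}"
  by (cases a) (simp add: odo_sdp_def)

lemma Psi_in:
  assumes a: "a \<in> carrier (GG K)" and x: "x \<in> X"
  shows "Psi p K a x \<in> X" "Psi p K a x K = snd a (x K)"
    "dz p K (Psi p K a x) = odo_add (qq p K) (dz p K x) (fst a (snd a (x K)))"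
proof -
  interpret Q: odo "qq p K" by (rule qq_odo)
  have r: "x K < p K" using odo_lt[OF x] .
  have sr: "snd a (x K) < p K" using a r unfolding carrier_GG by (metis perm_lt)
  have v: "fst a (snd a (x K)) \<in> odometer (qq p K)" using a sr unfolding carrier_GG by auto
  have z: "odo_add (qq p K) (dz p K x) (fst a (snd a (x K))) \<in> odometer (qq p K)"
    by (rule Q.add_in[OF dz_in[OF x] v])
  show "Psi p K a x \<in> X" using x enc_in[OF z] unfolding Psi_def by simp
  show "Psi p K a x K = snd a (x K)" using x enc_K[OF sr] unfolding Psi_def by simp
  show "dz p K (Psi p K a x) = odo_add (qq p K) (dz p K x) (fst a (snd a (x K)))"
    using x dz_enc[OF sr z] unfolding Psi_def by simp
qed

lemma Psi_mult:
  assumes a: "a \<in> carrier (GG K)" and b: "b \<in> carrier (GG K)"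
  shows "a \<otimes>\<^bsub>GG K\<^esub> b \<in> carrier (GG K)"
    "Psi p K (a \<otimes>\<^bsub>GG K\<^esub> b) = compose X (Psi p K a) (Psi p K b)"
proof -
  interpret Q: odo "qq p K" by (rule qq_odo)
  obtain v \<sigma> where av: "a = (v, \<sigma>)" by (cases a)
  obtain w \<tau> where bw: "b = (w, \<tau>)" by (cases b)
  have v: "v \<in> {0..<p K} \<rightarrow>\<^sub>E odometer (qq p K)" and \<sigma>: "\<sigma> permutes {0..<p K}"
    using a av unfolding carrier_GG by auto
  have w: "w \<in> {0..<p K} \<rightarrow>\<^sub>E odometer (qq p K)" and \<tau>: "\<tau> permutes {0..<p K}"
    using b bw unfolding carrier_GG by auto
  have ab: "a \<otimes>\<^bsub>GG K\<^esub> b = (restrict (\<lambda>i. odo_add (qq p K) (v i) (w (inv_into UNIV \<sigma> i))) {0..<p K}, \<sigma> \<circ> \<tau>)"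
    unfolding av bw by (simp add: odo_sdp_def)
  have invs: "inv_into UNIV \<sigma> permutes {0..<p K}" using permutes_inv[OF \<sigma>] by (simp add: inv_def)
  have h1: "(\<lambda>i\<in>{0..<p K}. odo_add (qq p K) (v i) (w (inv_into UNIV \<sigma> i))) \<in> {0..<p K} \<rightarrow>\<^sub>E odometer (qq p K)"
    proof (rule restrict_PiE_iff[THEN iffD2], intro ballI)
      fix i assume i: "i \<in> {0..<p K}"
      then have "inv_into UNIV \<sigma> i \<in> {0..<p K}" using perm_lt[OF invs, of i] by simp
      then have "w (inv_into UNIV \<sigma> i) \<in> odometer (qq p K)" using w by blast
      moreover have "v i \<in> odometer (qq p K)" using v i by blast
      ultimately show "odo_add (qq p K) (v i) (w (inv_into UNIV \<sigma> i)) \<in> odometer (qq p K)"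
        by (rule Q.add_in[rotated])
    qed
  have h2: "\<sigma> \<circ> \<tau> permutes {0..<p K}" by (rule permutes_compose[OF \<tau> \<sigma>])
  show "a \<otimes>\<^bsub>GG K\<^esub> b \<in> carrier (GG K)"
    unfolding ab carrier_GG using h1 h2 by simp
  show "Psi p K (a \<otimes>\<^bsub>GG K\<^esub> b) = compose X (Psi p K a) (Psi p K b)"
  proof
    fix x
    show "Psi p K (a \<otimes>\<^bsub>GG K\<^esub> b) x = compose X (Psi p K a) (Psi p K b) x"
    proof (cases "x \<in> X")
      case False then show ?thesis unfolding Psi_def compose_def by simp
    next
      case x: True
      let ?r = "x K"
      have r: "?r < p K" using odo_lt[OF x] .
      have tr: "\<tau> ?r < p K" using \<tau> r perm_lt by blast
      have str: "\<sigma> (\<tau> ?r) < p K" using \<sigma> tr perm_lt by blast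
      have y: "Psi p K b x \<in> X" "Psi p K b x K = \<tau> ?r"
        "dz p K (Psi p K b x) = odo_add (qq p K) (dz p K x) (w (\<tau> ?r))"
        using Psi_in[OF b x] bw by auto
      have lhs: "compose X (Psi p K a) (Psi p K b) x =
          enc p K (\<sigma> (\<tau> ?r)) (odo_add (qq p K) (odo_add (qq p K) (dz p K x) (w (\<tau> ?r))) (v (\<sigma> (\<tau> ?r))))"
        using x y unfolding compose_def Psi_def av by simp
      have iv: "inv_into UNIV \<sigma> (\<sigma> (\<tau> ?r)) = \<tau> ?r"
        using permutes_inverses(2)[OF \<sigma>] by (simp add: inv_def)
      have rhs: "Psi p K (a \<otimes>\<^bsub>GG K\<^esub> b) x =
          enc p K (\<sigma> (\<tau> ?r)) (odo_add (qq p K) (dz p K x) (odo_add (qq p K) (v (\<sigma> (\<tau> ?r))) (w (\<tau> ?r))))"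
        using x str iv unfolding Psi_def ab by simp
      show ?thesis unfolding lhs rhs by (simp only: Q.add_assoc Q.add_comm[of "w (\<tau> ?r)"])
    qed
  qed
qed

lemma Psi_id:
  assumes "\<And>r. r < p K \<Longrightarrow> snd a r = r \<and> fst a r = (\<lambda>n. 0)" and x: "x \<in> X"
  shows "Psi p K a x = x"
proof -
  interpret Q: odo "qq p K" by (rule qq_odo)
  have r: "x K < p K" using odo_lt[OF x] .
  have "Psi p K a x = enc p K (x K) (odo_add (qq p K) (dz p K x) (\<lambda>n. 0))"
    unfolding Psi_def using x assms(1)[OF r] by simp
  then show ?thesis using Q.add_zero[OF dz_in[OF x]] enc_dz[OF x] by simp
qed

lemma Psi_coord:
  assumes a: "a \<in> carrier (GG K)" and x: "x \<in> X"
  shows "Psi p K a x j = (snd a (x K) + p K * (dz p K x j + fst a (snd a (x K)) j)) mod p j"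
proof -
  let ?s = "snd a (x K)" and ?c = "fst a (snd a (x K))"
  have "Psi p K a x j = (?s + p K * ((dz p K x j + ?c j) mod qq p K j)) mod p j"
    using x unfolding Psi_def enc_def odo_add_def by simp
  also have "\<dots> = (?s + (p K * ((dz p K x j + ?c j) mod qq p K j)) mod p j) mod p j"
    by (simp add: mod_add_right_eq)
  also have "\<dots> = (?s + (p K * (dz p K x j + ?c j)) mod p j) mod p j"
    by (simp add: L_mod)
  also have "\<dots> = (?s + p K * (dz p K x j + ?c j)) mod p j"
    by (simp add: mod_add_right_eq)
  finally show ?thesis .
qed

lemma coord': "x \<in> X \<Longrightarrow> x j = (x K + p K * dz p K x j) mod p j"
  by (rule coord)

lemma Psi_loc: assumes a: "a \<in> carrier (GG K)" shows "locK p K (Psi p K a)"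
  unfolding locK_def
proof (intro ballI impI allI)
  fix x y j assume x: "x \<in> X" and y: "y \<in> X" and xy: "x K = y K"
  let ?r = "x K"
  let ?s = "snd a ?r" and ?c = "fst a (snd a ?r)"
  have fx: "Psi p K a x j = (?s + p K * (dz p K x j + ?c j)) mod p j" by (rule Psi_coord[OF a x])
  have fy: "Psi p K a y j = (?s + p K * (dz p K y j + ?c j)) mod p j"
    using Psi_coord[OF a y, of j] xy by simp
  have xj: "x j = (?r + p K * dz p K x j) mod p j" by (rule coord[OF x])
  have yj: "y j = (?r + p K * dz p K y j) mod p j" using coord[OF y, of j K] xy by simp
  have e1: "(Psi p K a y j + x j) mod p j = ((?s + p K * (dz p K y j + ?c j)) + (?r + p K * dz p K x j)) mod p j"
    unfolding fy xj by (simp add: mod_add_eq)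
  have e2: "(Psi p K a x j + y j) mod p j = ((?s + p K * (dz p K x j + ?c j)) + (?r + p K * dz p K y j)) mod p j"
    unfolding fx yj by (simp add: mod_add_eq)
  have "(?s + p K * (dz p K y j + ?c j)) + (?r + p K * dz p K x j) = (?s + p K * (dz p K x j + ?c j)) + (?r + p K * dz p K y j)"
    by (simp add: algebra_simps)
  then show "(Psi p K a y j + x j) mod p j = (Psi p K a x j + y j) mod p j"
    unfolding e1 e2 by (rule arg_cong)
qed

lemma comm_from_loc:
  assumes l: "locK p K f" and fX: "\<And>x. x \<in> X \<Longrightarrow> f x \<in> X" and x: "x \<in> X"
  shows "f ((add1 p ^^ p K) x) = (add1 p ^^ p K) (f x)"
proof -
  let ?y = "\<lambda>j. (x j + p K) mod p j"
  have y: "?y \<in> X" by (rule shift_in[OF x])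
  have yK: "?y K = x K" using odo_lt[OF x, of K] by simp
  have "f ?y = (\<lambda>j. (f x j + p K) mod p j)"
  proof
    fix j
    have "(f ?y j + x j) mod p j = (f x j + ?y j) mod p j"
      using l x y yK unfolding locK_def by metis
    also have "\<dots> = (f x j + p K + x j) mod p j" by (simp add: mod_simps add_ac)
    finally have "[f ?y j + x j = (f x j + p K) + x j] (mod p j)" unfolding cong_def by simp
    then have "[f ?y j = f x j + p K] (mod p j)" by (simp add: cong_add_rcancel_nat)
    then show "f ?y j = (f x j + p K) mod p j"
      using odo_lt[OF fX[OF y]] unfolding cong_def by simp
  qed
  then show ?thesis using add1_pow[OF x] add1_pow[OF fX[OF x]] by simp
qed

lemma Psi_cont: assumes a: "a \<in> carrier (GG K)" shows "continuous_map (odo_top p) (odo_top p) (Psi p K a)"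
proof (rule cont_LC)
  fix x assume "x \<in> X" then show "Psi p K a x \<in> X" using Psi_in[OF a] by blast
next
  fix j
  show "\<exists>N. \<forall>x\<in>X. \<forall>y\<in>X. x N = y N \<longrightarrow> Psi p K a x j = Psi p K a y j"
  proof (intro exI[of _ "j + K"] ballI impI)
    fix x y assume x: "x \<in> X" and y: "y \<in> X" and e: "x (j + K) = y (j + K)"
    have "x K = y K" by (rule odo_eqI[OF x y e]) simp
    moreover have "dz p K x j = dz p K y j" unfolding dz_def using e by simp
    ultimately show "Psi p K a x j = Psi p K a y j" using Psi_coord[OF a x, of j] Psi_coord[OF a y, of j] by simp
  qed
qed

lemma Psi_inv:
  assumes a: "a \<in> carrier (GG K)"
  shows "\<exists>a'\<in>carrier (GG K). (\<forall>x\<in>X. Psi p K a (Psi p K a' x) = x) \<and> (\<forall>x\<in>X. Psi p K a' (Psi p K a x) = x)"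
proof -
  interpret Q: odo "qq p K" by (rule qq_odo)
  obtain v \<sigma> where av: "a = (v, \<sigma>)" by (cases a)
  have v: "v \<in> {0..<p K} \<rightarrow>\<^sub>E odometer (qq p K)" and \<sigma>: "\<sigma> permutes {0..<p K}"
    using a av unfolding carrier_GG by auto
  have invs: "inv_into UNIV \<sigma> permutes {0..<p K}" using permutes_inv[OF \<sigma>] by (simp add: inv_def)
  have ii: "inv_into UNIV (inv_into UNIV \<sigma>) = \<sigma>" using permutes_inv_inv[OF \<sigma>] by (simp add: inv_def)
  have i1: "\<sigma> (inv_into UNIV \<sigma> r) = r" for r using permutes_inverses(1)[OF \<sigma>] by (simp add: inv_def)
  have i2: "inv_into UNIV \<sigma> (\<sigma> r) = r" for r using permutes_inverses(2)[OF \<sigma>] by (simp add: inv_def)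
  define v' where "v' = restrict (\<lambda>i. odo_neg (qq p K) (v (\<sigma> i))) {0..<p K}"
  define a' where "a' = (v', inv_into UNIV \<sigma>)"
  have vmem: "i < p K \<Longrightarrow> v i \<in> odometer (qq p K)" for i using v by auto
  have v': "v' \<in> {0..<p K} \<rightarrow>\<^sub>E odometer (qq p K)"
    unfolding v'_def using vmem perm_lt[OF \<sigma>] Q.neg_in by auto
  have a': "a' \<in> carrier (GG K)" unfolding a'_def carrier_GG using v' invs by simp
  have m1: "a \<otimes>\<^bsub>GG K\<^esub> a' = (restrict (\<lambda>i. odo_add (qq p K) (v i) (v' (inv_into UNIV \<sigma> i))) {0..<p K}, \<sigma> \<circ> inv_into UNIV \<sigma>)"
    unfolding av a'_def by (simp add: odo_sdp_def)
  have m2: "a' \<otimes>\<^bsub>GG K\<^esub> a = (restrict (\<lambda>i. odo_add (qq p K) (v' i) (v (\<sigma> i))) {0..<p K}, inv_into UNIV \<sigma> \<circ> \<sigma>)"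
    unfolding av a'_def by (simp add: odo_sdp_def ii)
  have c1: "Psi p K a (Psi p K a' x) = x" if x: "x \<in> X" for x
  proof -
    have "Psi p K a (Psi p K a' x) = Psi p K (a \<otimes>\<^bsub>GG K\<^esub> a') x"
      using Psi_mult(2)[OF a a'] x by (simp add: compose_def)
    also have "\<dots> = x"
    proof (rule Psi_id[OF _ x])
      fix r assume r: "r < p K"
      have ir: "inv_into UNIV \<sigma> r < p K" by (rule perm_lt[OF invs r])
      have "odo_add (qq p K) (v r) (odo_neg (qq p K) (v r)) = (\<lambda>n. 0)"
        using Q.neg_add[OF vmem[OF r]] Q.add_comm by metis
      then show "snd (a \<otimes>\<^bsub>GG K\<^esub> a') r = r \<and> fst (a \<otimes>\<^bsub>GG K\<^esub> a') r = (\<lambda>n. 0)"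
        unfolding m1 v'_def using r ir i1 by simp
    qed
    finally show ?thesis .
  qed
  have c2: "Psi p K a' (Psi p K a x) = x" if x: "x \<in> X" for x
  proof -
    have "Psi p K a' (Psi p K a x) = Psi p K (a' \<otimes>\<^bsub>GG K\<^esub> a) x"
      using Psi_mult(2)[OF a' a] x by (simp add: compose_def)
    also have "\<dots> = x"
    proof (rule Psi_id[OF _ x])
      fix r assume r: "r < p K"
      have sr: "\<sigma> r < p K" by (rule perm_lt[OF \<sigma> r])
      have "odo_add (qq p K) (odo_neg (qq p K) (v (\<sigma> r))) (v (\<sigma> r)) = (\<lambda>n. 0)"
        using Q.neg_add[OF vmem[OF sr]] by metis
      then show "snd (a' \<otimes>\<^bsub>GG K\<^esub> a) r = r \<and> fst (a' \<otimes>\<^bsub>GG K\<^esub> a) r = (\<lambda>n. 0)"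
        unfolding m2 v'_def using r i2 by simp
    qed
    finally show ?thesis .
  qed
  show ?thesis using a' c1 c2 by blast
qed

lemma Psi_aut: assumes a: "a \<in> carrier (GG K)" shows "Psi p K a \<in> aut_pow p (p K)"
proof -
  obtain a' where a': "a' \<in> carrier (GG K)" "\<forall>x\<in>X. Psi p K a (Psi p K a' x) = x" "\<forall>x\<in>X. Psi p K a' (Psi p K a x) = x"
    using Psi_inv[OF a] by blast
  have "homeomorphic_maps (odo_top p) (odo_top p) (Psi p K a) (Psi p K a')"
    unfolding homeomorphic_maps_def topspace_odo using Psi_cont[OF a] Psi_cont[OF a'(1)] a'(2,3) by blast
  then have h: "homeomorphic_map (odo_top p) (odo_top p) (Psi p K a)"
    using homeomorphic_map_maps by blast
  have e: "Psi p K a \<in> extensional X" unfolding Psi_def by simp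
  have c: "\<forall>x\<in>X. Psi p K a ((add1 p ^^ p K) x) = (add1 p ^^ p K) (Psi p K a x)"
    using comm_from_loc[OF Psi_loc[OF a]] Psi_in(1)[OF a] by blast
  show ?thesis unfolding aut_pow_def using e h c by blast
qed

lemma Psi_inj: "inj_on (Psi p K) (carrier (GG K))"
proof (rule inj_onI)
  interpret Q: odo "qq p K" by (rule qq_odo)
  fix a b assume a: "a \<in> carrier (GG K)" and b: "b \<in> carrier (GG K)" and e: "Psi p K a = Psi p K b"
  obtain v \<sigma> where av: "a = (v, \<sigma>)" by (cases a)
  obtain w \<tau> where bw: "b = (w, \<tau>)" by (cases b)
  have v: "v \<in> {0..<p K} \<rightarrow>\<^sub>E odometer (qq p K)" and \<sigma>: "\<sigma> permutes {0..<p K}"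
    using a av unfolding carrier_GG by auto
  have w: "w \<in> {0..<p K} \<rightarrow>\<^sub>E odometer (qq p K)" and \<tau>: "\<tau> permutes {0..<p K}"
    using b bw unfolding carrier_GG by auto
  have key: "\<sigma> r = \<tau> r \<and> v (\<sigma> r) = w (\<tau> r)" if r: "r < p K" for r
  proof -
    let ?e = "enc p K r (\<lambda>n. 0)"
    have eX: "?e \<in> X" by (rule enc_in[OF Q.zero_in])
    have eK: "?e K = r" by (rule enc_K[OF r])
    have dze: "dz p K ?e = (\<lambda>n. 0)" by (rule dz_enc[OF r Q.zero_in])
    have sr: "\<sigma> r < p K" "\<tau> r < p K" using perm_lt[OF \<sigma> r] perm_lt[OF \<tau> r] by auto
    have 1: "\<sigma> r = \<tau> r" using Psi_in(2)[OF a eX] Psi_in(2)[OF b eX] e eK av bw by simp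
    have vm: "v (\<sigma> r) \<in> odometer (qq p K)" using v sr(1) by auto
    have wm: "w (\<tau> r) \<in> odometer (qq p K)" using w sr(2) by auto
    have "v (\<sigma> r) = dz p K (Psi p K a ?e)"
      using Psi_in(3)[OF a eX] eK dze av Q.zero_add[OF vm] by simp
    also have "\<dots> = dz p K (Psi p K b ?e)" using e by simp
    also have "\<dots> = w (\<tau> r)"
      using Psi_in(3)[OF b eX] eK dze bw Q.zero_add[OF wm] by simp
    finally show ?thesis using 1 by simp
  qed
  have "\<sigma> = \<tau>"
  proof
    fix r show "\<sigma> r = \<tau> r"
    proof (cases "r < p K")
      case True then show ?thesis using key by blast
    next
      case False
      then have "r \<notin> {0..<p K}" by simp
      then show ?thesis using permutes_not_in[OF \<sigma>, of r] permutes_not_in[OF \<tau>, of r] by simp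
    qed
  qed
  moreover have "v = w"
  proof
    fix i show "v i = w i"
    proof (cases "i < p K")
      case True
      have i1: "\<sigma> (inv_into UNIV \<sigma> i) = i" using permutes_inverses(1)[OF \<sigma>] by (simp add: inv_def)
      have "inv_into UNIV \<sigma> i < p K" using perm_lt[OF permutes_inv[OF \<sigma>] True] by (simp add: inv_def)
      then show ?thesis using key[of "inv_into UNIV \<sigma> i"] i1 \<open>\<sigma> = \<tau>\<close> by simp
    next
      case False
      then have "i \<notin> {0..<p K}" by simp
      then show ?thesis using PiE_arb[OF v] PiE_arb[OF w] by simp
    qed
  qed
  ultimately show "a = b" using av bw by simp
qed

lemma pow_in: "x \<in> X \<Longrightarrow> (add1 p ^^ n) x \<in> X"
  using add1_pow shift_in by simp

lemma shift_comm:
  assumes fX: "\<And>x. x \<in> X \<Longrightarrow> f x \<in> X"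
    and comm: "\<And>x. x \<in> X \<Longrightarrow> f ((add1 p ^^ n) x) = (add1 p ^^ n) (f x)"
    and x: "x \<in> X"
  shows "f (\<lambda>i. (x i + n * t) mod p i) = (\<lambda>i. (f x i + n * t) mod p i)"
proof (induction t)
  case 0
  have "(\<lambda>i. (x i + n * 0) mod p i) = x" using odo_lt[OF x] by auto
  moreover have "(\<lambda>i. (f x i + n * 0) mod p i) = f x" using odo_lt[OF fX[OF x]] by auto
  ultimately show ?case by simp
next
  case (Suc t)
  let ?z = "\<lambda>i. (x i + n * t) mod p i"
  have z: "?z \<in> X" by (rule shift_in[OF x])
  have "(\<lambda>i. (x i + n * Suc t) mod p i) = (add1 p ^^ n) ?z"
    unfolding add1_pow[OF z] by (simp add: mod_simps add_ac)
  then have "f (\<lambda>i. (x i + n * Suc t) mod p i) = (add1 p ^^ n) (f ?z)" using comm[OF z] by simp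
  also have "\<dots> = (add1 p ^^ n) (\<lambda>i. (f x i + n * t) mod p i)" using Suc by simp
  also have "\<dots> = (\<lambda>i. (f x i + n * Suc t) mod p i)"
    unfolding add1_pow[OF shift_in[OF fX[OF x]]] by (simp add: mod_simps add_ac)
  finally show ?case .
qed

lemma solve_t:
  assumes x: "x \<in> X" and y: "y \<in> X" and xy: "x K = y K" and NK: "K \<le> N"
    and g: "gcd n (p N) dvd p K"
  shows "\<exists>t. (x N + n * t) mod p N = y N"
proof -
  obtain s where s: "[n * s = gcd n (p N)] (mod p N)" using cong_solve_nat by blast
  let ?d = "y N + p N - x N"
  have le: "x N \<le> y N + p N" using odo_lt[OF x, of N] by simp
  have "(y N + p N) mod p K = y N mod p K" using dvd_mono[OF NK] by (simp add: mod_add_right_eq[symmetric])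
  also have "\<dots> = x N mod p K" using odo_mod[OF y NK] odo_mod[OF x NK] xy by simp
  finally have "p K dvd ?d" using mod_eq_dvd_iff_nat[OF le] by simp
  then have "gcd n (p N) dvd ?d" using g dvd_trans by blast
  then obtain c where c: "?d = gcd n (p N) * c" by blast
  have "[n * (s * c) = gcd n (p N) * c] (mod p N)"
    using cong_mult[OF s cong_refl[of c]] by (simp add: mult.assoc)
  then have "[x N + n * (s * c) = x N + ?d] (mod p N)" unfolding c by (rule cong_add[OF cong_refl])
  moreover have "x N + ?d = y N + p N" using le by simp
  ultimately have "(x N + n * (s * c)) mod p N = (y N + p N) mod p N" unfolding cong_def by simp
  also have "\<dots> = y N" using odo_lt[OF y, of N] by simp
  finally show ?thesis by blast
qed

lemma struct_loc:
  assumes f: "continuous_map (odo_top p) (odo_top p) f"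
    and fX: "\<And>x. x \<in> X \<Longrightarrow> f x \<in> X"
    and comm: "\<And>x. x \<in> X \<Longrightarrow> f ((add1 p ^^ n) x) = (add1 p ^^ n) (f x)"
    and Kc: "\<And>j. j \<ge> K \<Longrightarrow> gcd n (p j) dvd p K"
  shows "locK p K f"
  unfolding locK_def
proof (intro ballI impI allI)
  fix x y j assume x: "x \<in> X" and y: "y \<in> X" and xy: "x K = y K"
  obtain N0 where N0: "\<forall>z\<in>X. z N0 = y N0 \<longrightarrow> f z j = f y j" using LC_conv[OF f y] by blast
  let ?N = "N0 + j + K"
  have NK: "K \<le> ?N" by simp
  have gN: "gcd n (p ?N) dvd p K" using Kc[OF NK] .
  obtain t where t: "(x ?N + n * t) mod p ?N = y ?N"
    using solve_t[OF x y xy NK gN] by blast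
  let ?z = "\<lambda>i. (x i + n * t) mod p i"
  have z: "?z \<in> X" by (rule shift_in[OF x])
  have le1: "N0 \<le> ?N" by simp
  have le2: "j \<le> ?N" by simp
  have "?z N0 = y N0" using odo_eqI[OF z y t le1] .
  then have fz: "f ?z j = f y j" using N0[rule_format, OF z] by blast
  have fzj: "f ?z j = (f x j + n * t) mod p j" using fun_cong[OF shift_comm[of f n x t, OF fX comm x], of j] by simp
  have yj: "y j = (x j + n * t) mod p j" using odo_eqI[OF z y t le2] by simp
  have "(f y j + x j) mod p j = ((f x j + n * t) mod p j + x j) mod p j" unfolding fz[symmetric] fzj ..
  also have "\<dots> = (f x j + (x j + n * t)) mod p j" by (simp add: mod_simps add_ac)
  also have "\<dots> = (f x j + y j) mod p j" unfolding yj by (simp add: mod_simps)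
  finally show "(f y j + x j) mod p j = (f x j + y j) mod p j" .
qed

lemma exK: assumes n: "0 < n" shows "\<exists>K. \<forall>j\<ge>K. gcd n (p j) dvd p K"
proof -
  let ?S = "range (\<lambda>j. gcd n (p j))"
  have fin: "finite ?S"
    by (rule finite_subset[of _ "{..n}"]) (use n in \<open>auto intro: gcd_le1_nat\<close>)
  have "Max ?S \<in> ?S" using fin by (intro Max_in) auto
  then obtain K where K: "gcd n (p K) = Max ?S" by auto
  show ?thesis
  proof (intro exI allI impI)
    fix j assume "K \<le> j"
    have d: "gcd n (p K) dvd gcd n (p j)"
      using gcd_mono[OF dvd_refl dvd_mono[OF \<open>K \<le> j\<close>]] .
    have "gcd n (p j) \<le> gcd n (p K)" unfolding K using fin by (intro Max_ge) auto
    moreover have "gcd n (p K) \<le> gcd n (p j)" using d n by (intro dvd_imp_le) auto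
    ultimately have "gcd n (p j) = gcd n (p K)" by simp
    then show "gcd n (p j) dvd p K" by simp
  qed
qed


lemma Psi_surj:
  assumes fa: "f \<in> aut_pow p n" and Kc: "\<And>j. j \<ge> K \<Longrightarrow> gcd n (p j) dvd p K"
  shows "f \<in> Psi p K ` carrier (GG K)"
proof -
  interpret Q: odo "qq p K" by (rule qq_odo)
  have fe: "f \<in> extensional X" and h: "homeomorphic_map (odo_top p) (odo_top p) f"
    and commf: "\<And>x. x \<in> X \<Longrightarrow> f ((add1 p ^^ n) x) = (add1 p ^^ n) (f x)"
    using fa unfolding aut_pow_def by auto
  obtain g where hm: "homeomorphic_maps (odo_top p) (odo_top p) f g"
    using h homeomorphic_map_maps by blast
  have fc: "continuous_map (odo_top p) (odo_top p) f" and gc: "continuous_map (odo_top p) (odo_top p) g"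
    and gf: "\<And>x. x \<in> X \<Longrightarrow> g (f x) = x" and fg: "\<And>x. x \<in> X \<Longrightarrow> f (g x) = x"
    using hm unfolding homeomorphic_maps_def topspace_odo by auto
  have fX: "\<And>x. x \<in> X \<Longrightarrow> f x \<in> X" using fc unfolding continuous_map_def topspace_odo by blast
  have gX: "\<And>x. x \<in> X \<Longrightarrow> g x \<in> X" using gc unfolding continuous_map_def topspace_odo by blast
  have commg: "g ((add1 p ^^ n) y) = (add1 p ^^ n) (g y)" if y: "y \<in> X" for y
  proof -
    have "g ((add1 p ^^ n) y) = g ((add1 p ^^ n) (f (g y)))" using fg[OF y] by simp
    also have "\<dots> = g (f ((add1 p ^^ n) (g y)))" using commf[OF gX[OF y]] by simp
    also have "\<dots> = (add1 p ^^ n) (g y)" using gf[OF pow_in[OF gX[OF y]]] .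
    finally show ?thesis .
  qed
  have lf: "locK p K f" by (rule struct_loc[OF fc fX commf Kc])
  have lg: "locK p K g" by (rule struct_loc[OF gc gX commg Kc])
  define e where "e = (\<lambda>r. enc p K r (\<lambda>n. 0))"
  have eX: "e r \<in> X" for r unfolding e_def by (rule enc_in[OF Q.zero_in])
  have eK: "r < p K \<Longrightarrow> e r K = r" for r unfolding e_def by (rule enc_K)
  have dze: "r < p K \<Longrightarrow> dz p K (e r) = (\<lambda>n. 0)" for r unfolding e_def by (rule dz_enc[OF _ Q.zero_in])
  define \<sigma> where "\<sigma> = (\<lambda>r. if r < p K then f (e r) K else r)"
  have \<sigma>lt: "\<sigma> r < p K" if "r < p K" for r
    using that odo_lt[OF fX[OF eX]] unfolding \<sigma>_def by simp
  have \<sigma>inj: "inj_on \<sigma> {0..<p K}"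
  proof (rule inj_onI)
    fix r r' assume r: "r \<in> {0..<p K}" and r': "r' \<in> {0..<p K}" and e1: "\<sigma> r = \<sigma> r'"
    then have same: "f (e r) K = f (e r') K" unfolding \<sigma>_def by simp
    have "(g (f (e r')) K + f (e r) K) mod p K = (g (f (e r)) K + f (e r') K) mod p K"
      using lg fX[OF eX] same unfolding locK_def by metis
    then have "(r' + f (e r) K) mod p K = (r + f (e r) K) mod p K"
      using gf[OF eX] eK r r' same by simp
    then have "[r' = r] (mod p K)" unfolding cong_def[symmetric] by (simp add: cong_add_rcancel_nat)
    then show "r = r'" using r r' cong_less_modulus_unique_nat by fastforce
  qed
  have \<sigma>img: "\<sigma> ` {0..<p K} = {0..<p K}"
    by (rule endo_inj_surj) (use \<sigma>lt \<sigma>inj in auto)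
  have \<sigma>p: "\<sigma> permutes {0..<p K}"
    by (rule bij_imp_permutes) (use \<sigma>inj \<sigma>img in \<open>auto simp: bij_betw_def \<sigma>_def\<close>)
  have i2: "inv_into UNIV \<sigma> (\<sigma> r) = r" for r using permutes_inverses(2)[OF \<sigma>p] by (simp add: inv_def)
  define v where "v = restrict (\<lambda>i. dz p K (f (e (inv_into UNIV \<sigma> i)))) {0..<p K}"
  have v: "v \<in> {0..<p K} \<rightarrow>\<^sub>E odometer (qq p K)"
    unfolding v_def using dz_in[OF fX[OF eX]] by auto
  have a: "(v, \<sigma>) \<in> carrier (GG K)" unfolding carrier_GG using v \<sigma>p by simp
  have "f = Psi p K (v, \<sigma>)"
  proof
    fix x show "f x = Psi p K (v, \<sigma>) x"
    proof (cases "x \<in> X")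
      case False then show ?thesis using fe unfolding Psi_def extensional_def by simp
    next
      case x: True
      let ?r = "x K"
      have r: "?r < p K" by (rule odo_lt[OF x])
      let ?w = "f (e ?r)"
      have w: "?w \<in> X" by (rule fX[OF eX])
      have sr: "\<sigma> ?r = ?w K" unfolding \<sigma>_def using r by simp
      have vsr: "v (\<sigma> ?r) = dz p K ?w" unfolding v_def using \<sigma>lt[OF r] i2 by simp
      show ?thesis
      proof
        fix j
        have P: "Psi p K (v, \<sigma>) x j = (?w K + p K * (dz p K x j + dz p K ?w j)) mod p j"
          using Psi_coord[OF a x, of j] sr vsr by simp
        have l1: "(f x j + e ?r j) mod p j = (?w j + x j) mod p j"
          using lf eX[of ?r] x eK[OF r] unfolding locK_def by metis
        have ej: "e ?r j = ?r mod p j" unfolding e_def enc_def by simp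
        have wj: "?w j = (?w K + p K * dz p K ?w j) mod p j" by (rule coord[OF w])
        have xj: "x j = (?r + p K * dz p K x j) mod p j" by (rule coord[OF x])
        have "(f x j + ?r) mod p j = (f x j + e ?r j) mod p j" unfolding ej by (simp add: mod_simps)
        also have "\<dots> = ((?w K + p K * dz p K ?w j) + (?r + p K * dz p K x j)) mod p j"
          unfolding l1 by (subst wj, subst xj) (simp add: mod_simps)
        also have "\<dots> = ((?w K + p K * (dz p K x j + dz p K ?w j)) + ?r) mod p j"
          by (simp add: algebra_simps)
        finally have "[f x j + ?r = (?w K + p K * (dz p K x j + dz p K ?w j)) + ?r] (mod p j)"
          unfolding cong_def .
        then have "[f x j = ?w K + p K * (dz p K x j + dz p K ?w j)] (mod p j)"
          by (simp add: cong_add_rcancel_nat)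
        then show "f x j = Psi p K (v, \<sigma>) x j"
          unfolding P cong_def using odo_lt[OF fX[OF x], of j] by simp
      qed
    qed
  qed
  then show ?thesis using a by blast
qed

lemma kS_props: "infinite (kS p y j) \<and> kr p y j < p j \<and> infinite (kS p y (Suc j))"
proof (induction j)
  case 0
  have "\<exists>r\<in>{..<p 0}. infinite {m \<in> kS p y 0. y m mod p 0 = r}"
    by (rule pigeonhole_infinite_rel) (auto simp: pos)
  then have "\<exists>r. r < p 0 \<and> infinite {m \<in> kS p y 0. y m mod p 0 = r}" by auto
  then have "kr p y 0 < p 0 \<and> infinite {m \<in> kS p y 0. y m mod p 0 = kr p y 0}"
    unfolding kr_def by (rule someI_ex)
  then show ?case unfolding kS_Suc' by simp
next
  case (Suc j)
  then have inf: "infinite (kS p y (Suc j))" by blast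
  have "\<exists>r\<in>{..<p (Suc j)}. infinite {m \<in> kS p y (Suc j). y m mod p (Suc j) = r}"
    by (rule pigeonhole_infinite_rel) (use inf in \<open>auto simp: pos\<close>)
  then have "\<exists>r. r < p (Suc j) \<and> infinite {m \<in> kS p y (Suc j). y m mod p (Suc j) = r}" by auto
  then have "kr p y (Suc j) < p (Suc j) \<and> infinite {m \<in> kS p y (Suc j). y m mod p (Suc j) = kr p y (Suc j)}"
    unfolding kr_def by (rule someI_ex)
  then show ?case using inf unfolding kS_Suc'[of p y "Suc j"] by simp
qed

lemma kr_in: "kr p y \<in> X"
proof (rule odo_memI)
  fix j show "kr p y j < p j" using kS_props by blast
next
  fix j
  have "infinite (kS p y (Suc (Suc j)))" using kS_props by blast
  then obtain m where m: "m \<in> kS p y (Suc (Suc j))" by (metis finite.emptyI ex_in_conv)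
  then have m1: "y m mod p (Suc j) = kr p y (Suc j)" and m2: "m \<in> kS p y (Suc j)"
    unfolding kS_Suc'[of p y "Suc j"] by auto
  then have m3: "y m mod p j = kr p y j" unfolding kS_Suc' by auto
  have "kr p y (Suc j) mod p j = y m mod p (Suc j) mod p j" using m1 by simp
  also have "\<dots> = y m mod p j" using dvd_suc by (simp add: mod_mod_cancel)
  finally show "kr p y (Suc j) mod p j = kr p y j" using m3 by simp
qed

lemma piK_in: "x \<in> X \<Longrightarrow> piK p K x \<in> odometer (qq p K)"
  unfolding piK_def
proof (rule odo.odo_memI[OF qq_odo])
  fix n show "x (n + K) mod qq p K n < qq p K n" using qq_pos by simp
next
  fix n assume x: "x \<in> X"
  have d1: "qq p K n dvd qq p K (Suc n)" by (rule qq_dvd)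
  have d2: "qq p K n dvd p (n + K)" using pK_qq[of K n] by (metis dvd_triv_right)
  have "x (Suc n + K) mod qq p K (Suc n) mod qq p K n = x (Suc n + K) mod qq p K n"
    using d1 by (simp add: mod_mod_cancel)
  also have "\<dots> = x (Suc n + K) mod p (n + K) mod qq p K n" using d2 by (simp add: mod_mod_cancel)
  also have "\<dots> = x (n + K) mod qq p K n" using odo_mod[OF x, of "n + K" "Suc n + K"] by simp
  finally show "x (Suc n + K) mod qq p K (Suc n) mod qq p K n = x (n + K) mod qq p K n" .
qed

lemma piK_surj: assumes y: "y \<in> odometer (qq p K)" shows "\<exists>x\<in>X. piK p K x = y"
proof (intro bexI[of _ "kr p y"] ext)
  interpret Q: odo "qq p K" by (rule qq_odo)
  show "kr p y \<in> X" by (rule kr_in)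
  fix n
  have "infinite (kS p y (Suc (n + K)))" using kS_props by blast
  then obtain m where m: "m \<ge> n" "m \<in> kS p y (Suc (n + K))" unfolding infinite_nat_iff_unbounded_le by blast
  then have m1: "y m mod p (n + K) = kr p y (n + K)" unfolding kS_Suc' by auto
  have d2: "qq p K n dvd p (n + K)" using pK_qq[of K n] by (metis dvd_triv_right)
  have "piK p K (kr p y) n = y m mod p (n + K) mod qq p K n" unfolding piK_def m1 ..
  also have "\<dots> = y m mod qq p K n" using d2 by (simp add: mod_mod_cancel)
  also have "\<dots> = y n" using Q.odo_mod[OF y m(1)] .
  finally show "piK p K (kr p y) n = y n" .
qed

lemma factor: "odo_factor (qq p K) p"
  unfolding odo_factor_def
proof (intro conjI exI[of _ "piK p K"])
  show "scale (qq p K)" by (rule scale_qq)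
  show "continuous_map (odo_top p) (odo_top (qq p K)) (piK p K)"
  proof (rule cont_LC)
    fix x assume "x \<in> X" then show "piK p K x \<in> odometer (qq p K)" by (rule piK_in)
  next
    fix j show "\<exists>N. \<forall>x\<in>X. \<forall>y\<in>X. x N = y N \<longrightarrow> piK p K x j = piK p K y j"
      by (rule exI[of _ "j + K"]) (simp add: piK_def)
  qed
  show "piK p K ` X = odometer (qq p K)"
    using piK_in piK_surj by blast
  show "\<forall>x\<in>X. piK p K (add1 p x) = add1 (qq p K) (piK p K x)"
  proof (intro ballI ext)
    fix x n assume x: "x \<in> X"
    have d2: "qq p K n dvd p (n + K)" using pK_qq[of K n] by (metis dvd_triv_right)
    have "piK p K (add1 p x) n = (x (n + K) + 1 mod p (n + K)) mod p (n + K) mod qq p K n"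
      unfolding piK_def add1_def odo_add_def odo_one_def ..
    also have "\<dots> = (x (n + K) + 1) mod p (n + K) mod qq p K n" by (simp only: mod_add_right_eq)
    also have "\<dots> = (x (n + K) + 1) mod qq p K n" using d2 by (rule mod_mod_cancel)
    also have "\<dots> = add1 (qq p K) (piK p K x) n"
      unfolding piK_def add1_def odo_add_def odo_one_def by (simp add: mod_simps)
    finally show "piK p K (add1 p x) n = add1 (qq p K) (piK p K x) n" .
  qed
qed

abbreviation "CC K \<equiv> carrier (GG K)"

lemma Psi_up: assumes a: "a \<in> CC K" shows "Psi p K a \<in> Psi p (Suc K) ` CC (Suc K)"
proof (rule Psi_surj[OF Psi_aut[OF a]])
  fix j assume "Suc K \<le> j"
  have "gcd (p K) (p j) dvd p K" by simp
  then show "gcd (p K) (p j) dvd p (Suc K)" using dvd_suc dvd_trans by blast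
qed

lemma phi_props: assumes a: "a \<in> CC K"
  shows "phiK p K a \<in> CC (Suc K)" "Psi p (Suc K) (phiK p K a) = Psi p K a"
  using Psi_up[OF a] unfolding phiK_def by (auto intro: inv_into_into f_inv_into_f)

lemma phi_hom: "phiK p K \<in> hom (GG K) (GG (Suc K))"
  unfolding hom_def
proof (intro CollectI conjI ballI)
  show "phiK p K \<in> CC K \<rightarrow> CC (Suc K)" using phi_props(1) by blast
next
  fix a b assume a: "a \<in> CC K" and b: "b \<in> CC K"
  have ab: "a \<otimes>\<^bsub>GG K\<^esub> b \<in> CC K" by (rule Psi_mult(1)[OF a b])
  have m: "phiK p K a \<otimes>\<^bsub>GG (Suc K)\<^esub> phiK p K b \<in> CC (Suc K)"
    by (rule Psi_mult(1)[OF phi_props(1)[OF a] phi_props(1)[OF b]])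
  have "Psi p (Suc K) (phiK p K (a \<otimes>\<^bsub>GG K\<^esub> b)) = Psi p (Suc K) (phiK p K a \<otimes>\<^bsub>GG (Suc K)\<^esub> phiK p K b)"
    unfolding phi_props(2)[OF ab] Psi_mult(2)[OF a b]
      Psi_mult(2)[OF phi_props(1)[OF a] phi_props(1)[OF b]] phi_props(2)[OF a] phi_props(2)[OF b] ..
  then show "phiK p K (a \<otimes>\<^bsub>GG K\<^esub> b) = phiK p K a \<otimes>\<^bsub>GG (Suc K)\<^esub> phiK p K b"
    using Psi_inj[of "Suc K"] phi_props(1)[OF ab] m by (meson inj_onD)
qed

lemma phi_inj: "inj_on (phiK p K) (CC K)"
proof (rule inj_onI)
  fix a b assume a: "a \<in> CC K" and b: "b \<in> CC K" and e: "phiK p K a = phiK p K b"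
  then have "Psi p K a = Psi p K b" using phi_props(2)[OF a] phi_props(2)[OF b] by metis
  then show "a = b" using Psi_inj[of K] a b by (meson inj_onD)
qed

lemma lift_props: assumes g: "g \<in> CC i"
  shows "dl_lift (phiK p) i d g \<in> CC (i + d) \<and> Psi p (i + d) (dl_lift (phiK p) i d g) = Psi p i g"
proof (induction d)
  case 0 then show ?case using g by simp
next
  case (Suc d)
  then show ?case using phi_props[of "dl_lift (phiK p) i d g" "i + d"] by simp
qed

lemma lift_props': assumes g: "g \<in> CC i" and k: "i \<le> k"
  shows "dl_lift (phiK p) i (k - i) g \<in> CC k" "Psi p k (dl_lift (phiK p) i (k - i) g) = Psi p i g"
  using lift_props[OF g, of "k - i"] k by auto

lemma rel_char: "((i, g), (j, h)) \<in> dl_rel GG (phiK p) \<longleftrightarrow> g \<in> CC i \<and> h \<in> CC j \<and> Psi p i g = Psi p j h"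
proof
  assume "((i, g), (j, h)) \<in> dl_rel GG (phiK p)"
  then obtain k where g: "g \<in> CC i" and h: "h \<in> CC j" and k: "i \<le> k" "j \<le> k"
    and e: "dl_lift (phiK p) i (k - i) g = dl_lift (phiK p) j (k - j) h"
    unfolding dl_rel_def by blast
  have "Psi p i g = Psi p j h" using lift_props'(2)[OF g k(1)] lift_props'(2)[OF h k(2)] e by simp
  then show "g \<in> CC i \<and> h \<in> CC j \<and> Psi p i g = Psi p j h" using g h by simp
next
  assume A: "g \<in> CC i \<and> h \<in> CC j \<and> Psi p i g = Psi p j h"
  let ?k = "max i j"
  have k: "i \<le> ?k" "j \<le> ?k" by auto
  have "Psi p ?k (dl_lift (phiK p) i (?k - i) g) = Psi p ?k (dl_lift (phiK p) j (?k - j) h)"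
    using lift_props'(2)[OF _ k(1), of g] lift_props'(2)[OF _ k(2), of h] A by simp
  then have "dl_lift (phiK p) i (?k - i) g = dl_lift (phiK p) j (?k - j) h"
    using Psi_inj[of ?k] lift_props'(1)[OF _ k(1), of g] lift_props'(1)[OF _ k(2), of h] A
    by (meson inj_onD)
  then show "((i, g), (j, h)) \<in> dl_rel GG (phiK p)"
    unfolding dl_rel_def using A k by blast
qed

lemma class_eq: assumes g: "g \<in> CC i" shows "dl_rel GG (phiK p) `` {(i, g)} = PhiD p (Psi p i g)"
proof -
  have "z \<in> dl_rel GG (phiK p) `` {(i, g)} \<longleftrightarrow> z \<in> PhiD p (Psi p i g)" for z
  proof -
    obtain j h where z: "z = (j, h)" by (cases z)
    have "z \<in> dl_rel GG (phiK p) `` {(i, g)} \<longleftrightarrow> ((i, g), (j, h)) \<in> dl_rel GG (phiK p)" using z by simp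
    also have "\<dots> \<longleftrightarrow> h \<in> CC j \<and> Psi p j h = Psi p i g" using rel_char[of i g j h] g by auto
    also have "\<dots> \<longleftrightarrow> z \<in> PhiD p (Psi p i g)" unfolding PhiD_def z by simp
    finally show ?thesis .
  qed
  then show ?thesis by blast
qed

lemma stab_carrier: "carrier (stab_aut p) = (\<Union>K. Psi p K ` CC K)"
proof
  show "carrier (stab_aut p) \<subseteq> (\<Union>K. Psi p K ` CC K)"
  proof
    fix f assume "f \<in> carrier (stab_aut p)"
    then obtain n where n: "n \<ge> 1" "f \<in> aut_pow p n" unfolding stab_aut_def by auto
    obtain K where K: "\<forall>j\<ge>K. gcd n (p j) dvd p K" using exK[of n] n(1) by auto
    have "f \<in> Psi p K ` CC K" by (rule Psi_surj[OF n(2)]) (use K in blast)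
    then show "f \<in> (\<Union>K. Psi p K ` CC K)" by blast
  qed
next
  show "(\<Union>K. Psi p K ` CC K) \<subseteq> carrier (stab_aut p)"
  proof
    fix f assume "f \<in> (\<Union>K. Psi p K ` CC K)"
    then obtain K a where a: "a \<in> CC K" "f = Psi p K a" by blast
    have "p K \<ge> 1" using pos[of K] by simp
    then show "f \<in> carrier (stab_aut p)" using Psi_aut[OF a(1)] a(2) unfolding stab_aut_def by auto
  qed
qed

lemma main_iso: "PhiD p \<in> iso (stab_aut p) (direct_limit GG (phiK p))"
proof -
  let ?DL = "direct_limit GG (phiK p)"
  have carrDL: "carrier ?DL = (SIGMA j:UNIV. CC j) // dl_rel GG (phiK p)"
    unfolding direct_limit_def by simp
  have inC: "PhiD p f \<in> carrier ?DL" if f: "f \<in> carrier (stab_aut p)" for f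
  proof -
    obtain K a where a: "a \<in> CC K" "f = Psi p K a" using f stab_carrier by blast
    have "dl_rel GG (phiK p) `` {(K, a)} \<in> (SIGMA j:UNIV. CC j) // dl_rel GG (phiK p)"
      by (rule quotientI) (use a in simp)
    then show ?thesis using class_eq[OF a(1)] a(2) carrDL by simp
  qed
  have nonempty: "\<exists>i g. (i, g) \<in> PhiD p f" if f: "f \<in> carrier (stab_aut p)" for f
  proof -
    obtain K a where a: "a \<in> CC K" "f = Psi p K a" using f stab_carrier by blast
    then have "(K, a) \<in> PhiD p f" unfolding PhiD_def by simp
    then show ?thesis by blast
  qed
  have hom: "PhiD p \<in> hom (stab_aut p) ?DL"
    unfolding hom_def
  proof (intro CollectI conjI ballI)
    show "PhiD p \<in> carrier (stab_aut p) \<rightarrow> carrier ?DL" using inC by blast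
  next
    fix f1 f2 assume f1: "f1 \<in> carrier (stab_aut p)" and f2: "f2 \<in> carrier (stab_aut p)"
    obtain i g where ig: "(SOME a. a \<in> PhiD p f1) = (i, g)" by (cases "SOME a. a \<in> PhiD p f1")
    obtain j h where jh: "(SOME a. a \<in> PhiD p f2) = (j, h)" by (cases "SOME a. a \<in> PhiD p f2")
    have "(i, g) \<in> PhiD p f1" unfolding ig[symmetric] using nonempty[OF f1] by (metis someI)
    then have g: "g \<in> CC i" "Psi p i g = f1" unfolding PhiD_def by auto
    have "(j, h) \<in> PhiD p f2" unfolding jh[symmetric] using nonempty[OF f2] by (metis someI)
    then have h: "h \<in> CC j" "Psi p j h = f2" unfolding PhiD_def by auto
    let ?k = "max i j"
    let ?g' = "dl_lift (phiK p) i (?k - i) g" and ?h' = "dl_lift (phiK p) j (?k - j) h"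
    have g': "?g' \<in> CC ?k" "Psi p ?k ?g' = f1" using lift_props'[OF g(1), of ?k] g(2) by auto
    have h': "?h' \<in> CC ?k" "Psi p ?k ?h' = f2" using lift_props'[OF h(1), of ?k] h(2) by auto
    have "mult ?DL (PhiD p f1) (PhiD p f2) = dl_rel GG (phiK p) `` {(?k, ?g' \<otimes>\<^bsub>GG ?k\<^esub> ?h')}"
      unfolding direct_limit_def dl_mult_def by (simp add: ig jh Let_def)
    also have "\<dots> = PhiD p (Psi p ?k (?g' \<otimes>\<^bsub>GG ?k\<^esub> ?h'))"
      by (rule class_eq[OF Psi_mult(1)[OF g'(1) h'(1)]])
    also have "Psi p ?k (?g' \<otimes>\<^bsub>GG ?k\<^esub> ?h') = compose X f1 f2"
      using Psi_mult(2)[OF g'(1) h'(1)] g'(2) h'(2) by simp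
    finally show "PhiD p (f1 \<otimes>\<^bsub>stab_aut p\<^esub> f2) = PhiD p f1 \<otimes>\<^bsub>?DL\<^esub> PhiD p f2"
      unfolding stab_aut_def by simp
  qed
  have inj: "inj_on (PhiD p) (carrier (stab_aut p))"
  proof (rule inj_onI)
    fix f1 f2 assume f1: "f1 \<in> carrier (stab_aut p)" and f2: "f2 \<in> carrier (stab_aut p)"
      and e: "PhiD p f1 = PhiD p f2"
    obtain i g where "(i, g) \<in> PhiD p f1" using nonempty[OF f1] by blast
    then have "(i, g) \<in> PhiD p f2" "(i, g) \<in> PhiD p f1" using e by auto
    then show "f1 = f2" unfolding PhiD_def by auto
  qed
  have surj: "PhiD p ` carrier (stab_aut p) = carrier ?DL"
  proof
    show "PhiD p ` carrier (stab_aut p) \<subseteq> carrier ?DL" using inC by blast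
  next
    show "carrier ?DL \<subseteq> PhiD p ` carrier (stab_aut p)"
    proof
      fix A assume "A \<in> carrier ?DL"
      then obtain i g where ig: "(i, g) \<in> (SIGMA j:UNIV. CC j)" "A = dl_rel GG (phiK p) `` {(i, g)}"
        unfolding carrDL by (auto elim!: quotientE)
      then have g: "g \<in> CC i" by simp
      have "A = PhiD p (Psi p i g)" using ig(2) class_eq[OF g] by simp
      moreover have "Psi p i g \<in> carrier (stab_aut p)" using stab_carrier g by blast
      ultimately show "A \<in> PhiD p ` carrier (stab_aut p)" by blast
    qed
  qed
  show ?thesis unfolding iso_def bij_betw_def using hom inj surj by blast
qed

end

theorem theorem1p1:
  fixes p :: "nat \<Rightarrow> nat"
  assumes "scale p"
  shows "\<exists>(G :: nat \<Rightarrow> ((nat \<Rightarrow> nat \<Rightarrow> nat) \<times> (nat \<Rightarrow> nat)) monoid) \<phi>.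
           (\<forall>j. \<exists>q k. odo_factor q p \<and> G j = odo_sdp q (p k))
         \<and> (\<forall>j. \<phi> j \<in> hom (G j) (G (Suc j)) \<and> inj_on (\<phi> j) (carrier (G j)))
         \<and> stab_aut p \<cong> direct_limit G \<phi>"
proof -
  interpret odo p using assms by (simp add: odo_def)
  show ?thesis
  proof (rule exI[of _ "\<lambda>K. odo_sdp (qq p K) (p K)"], rule exI[of _ "phiK p"], intro conjI allI)
    show "\<exists>q k. odo_factor q p \<and> odo_sdp (qq p j) (p j) = odo_sdp q (p k)" for j
      using factor[of j] by blast
    show "phiK p j \<in> hom (odo_sdp (qq p j) (p j)) (odo_sdp (qq p (Suc j)) (p (Suc j)))" for j
      by (rule phi_hom)
    show "inj_on (phiK p j) (carrier (odo_sdp (qq p j) (p j)))" for j by (rule phi_inj)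
    show "stab_aut p \<cong> direct_limit (\<lambda>K. odo_sdp (qq p K) (p K)) (phiK p)"
      unfolding is_iso_def using main_iso by blast
  qed
qed

end
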